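(* Let $U,V$ be nonempty sets, $A,A^*$ fuzzy subsets of $U$ and $B$ a fuzzy subset of $V$. Let $\odot$ be a semi-overlap function having $1$ as neutral element and let $\rightarrow$ be its residual implication, $a\rightarrow b=\sup\{w\in[0,1]\mid a\odot w\le b\}$. Then the FMP-solution $B^*$ of the quintuple implication principle exists and is given, for every $v\in V$, by $$B^*(v)=\sup_{u\in U}\big\{A^*(u)\odot[(A^*(u)\rightarrow A(u))\odot(A(u)\rightarrow B(v))]\big\}.$$
   Context: A semi-overlap function is a function $\odot:[0,1]^2\to[0,1]$ such that for all $u,v\in[0,1]$: $u\odot v=v\odot u$; if $uv=0$ then $u\odot v=0$; if $uv=1$ then $u\odot v=1$; $\odot$ is increasing in each variable; and $\odot$ is left-continuous: $u\odot\sup_{i\in I}v_i=\sup_{i\in I}(u\odot v_i)$ for every $u$ and nonempty family $\{v_i\}_{i\in I}\subseteq[0,1]$. $1$ is a neutral element if $1\odot v=v$ for all $v$. A fuzzy subset of $U$ is a function $U\to[0,1]$; fuzzy subsets are ordered pointwise. Given $A,A^*$ on $U$ and $B$ on $V$, the FMP-solution of the quintuple implication principle is the minimum fuzzy subset $B^*$ of $V$ (with respect to the pointwise order) such that for all $u\in U,v\in V$, $$(A(u)\rightarrow B(v))\rightarrow\big((A^*(u)\rightarrow A(u))\rightarrow(A^*(u)\rightarrow B^*(v))\big)=1.$$ *)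

theory Defs
  imports Complex_Main
begin

text \<open>Truth values are reals in the unit interval [0,1]. A binary operator on [0,1]
is modelled as a function real => real => real whose behaviour is only constrained on [0,1].\<close>

definition semi_overlap :: "(real \<Rightarrow> real \<Rightarrow> real) \<Rightarrow> bool" where
  "semi_overlap ov \<longleftrightarrow>
     (\<forall>u\<in>{0..1}. \<forall>v\<in>{0..1}. ov u v \<in> {0..1}) \<and>
     (\<forall>u\<in>{0..1}. \<forall>v\<in>{0..1}. ov u v = ov v u) \<and>
     (\<forall>u\<in>{0..1}. \<forall>v\<in>{0..1}. u * v = 0 \<longrightarrow> ov u v = 0) \<and>
     (\<forall>u\<in>{0..1}. \<forall>v\<in>{0..1}. u * v = 1 \<longrightarrow> ov u v = 1) \<and>
     (\<forall>u\<in>{0..1}. \<forall>v\<in>{0..1}. \<forall>w\<in>{0..1}. v \<le> w \<longrightarrow> ov u v \<le> ov u w) \<and>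
     (\<forall>u\<in>{0..1}. \<forall>S. S \<noteq> {} \<longrightarrow> S \<subseteq> {0..1} \<longrightarrow>
        ov u (Sup S) = (SUP v\<in>S. ov u v))"

definition one_neutral :: "(real \<Rightarrow> real \<Rightarrow> real) \<Rightarrow> bool" where
  "one_neutral ov \<longleftrightarrow> (\<forall>v\<in>{0..1}. ov 1 v = v)"

definition residual :: "(real \<Rightarrow> real \<Rightarrow> real) \<Rightarrow> real \<Rightarrow> real \<Rightarrow> real" where
  "residual ov a b = Sup {w \<in> {0..1}. ov a w \<le> b}"

definition fuzzy_subset :: "('a \<Rightarrow> real) \<Rightarrow> bool" where
  "fuzzy_subset A \<longleftrightarrow> (\<forall>x. A x \<in> {0..1})"

definition QIP_FMP_cond ::
  "(real \<Rightarrow> real \<Rightarrow> real) \<Rightarrow> ('u \<Rightarrow> real) \<Rightarrow> ('u \<Rightarrow> real) \<Rightarrow> ('v \<Rightarrow> real) \<Rightarrow> ('v \<Rightarrow> real) \<Rightarrow> bool" where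
  "QIP_FMP_cond ov A As B Bs \<longleftrightarrow>
     fuzzy_subset Bs \<and>
     (\<forall>u v. residual ov (residual ov (A u) (B v))
              (residual ov (residual ov (As u) (A u)) (residual ov (As u) (Bs v))) = 1)"

definition QIP_FMP_solution ::
  "(real \<Rightarrow> real \<Rightarrow> real) \<Rightarrow> ('u \<Rightarrow> real) \<Rightarrow> ('u \<Rightarrow> real) \<Rightarrow> ('v \<Rightarrow> real) \<Rightarrow> ('v \<Rightarrow> real) \<Rightarrow> bool" where
  "QIP_FMP_solution ov A As B Bs \<longleftrightarrow>
     QIP_FMP_cond ov A As B Bs \<and>
     (\<forall>C. QIP_FMP_cond ov A As B C \<longrightarrow> (\<forall>v. Bs v \<le> C v))"

end

theory Submission
  imports Defs
begin

lemma so_range: "semi_overlap ov \<Longrightarrow> a \<in> {0..1} \<Longrightarrow> b \<in> {0..1} \<Longrightarrow> ov a b \<in> {0..1}"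
  unfolding semi_overlap_def by (elim conjE) blast
lemma so_comm: "semi_overlap ov \<Longrightarrow> a \<in> {0..1} \<Longrightarrow> b \<in> {0..1} \<Longrightarrow> ov a b = ov b a"
  unfolding semi_overlap_def by (elim conjE) blast
lemma so_zero: "semi_overlap ov \<Longrightarrow> a \<in> {0..1} \<Longrightarrow> ov a 0 = 0"
  unfolding semi_overlap_def by (elim conjE) (metis atLeastAtMost_iff mult_zero_right order_refl zero_le_one)
lemma so_mono: "semi_overlap ov \<Longrightarrow> a \<in> {0..1} \<Longrightarrow> v \<in> {0..1} \<Longrightarrow> w \<in> {0..1} \<Longrightarrow> v \<le> w \<Longrightarrow> ov a v \<le> ov a w"
  unfolding semi_overlap_def by (elim conjE) blast
lemma so_lc: "semi_overlap ov \<Longrightarrow> a \<in> {0..1} \<Longrightarrow> S \<noteq> {} \<Longrightarrow> S \<subseteq> {0..1} \<Longrightarrow> ov a (Sup S) = (SUP v\<in>S. ov a v)"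
  unfolding semi_overlap_def by (elim conjE) blast

lemma res_facts:
  assumes so: "semi_overlap ov" and a: "a \<in> {0..1}" and b: "b \<in> {0..1}"
  shows "residual ov a b \<in> {0..1}"
    and "\<And>w. w \<in> {0..1} \<Longrightarrow> ov a w \<le> b \<longleftrightarrow> w \<le> residual ov a b"
proof -
  define S where "S = {w \<in> {0..1}. ov a w \<le> b}"
  have z: "ov a 0 = 0" using so_zero[OF so a] .
  have "0 \<in> S" using z b by (simp add: S_def)
  hence ne: "S \<noteq> {}" by blast
  have sub: "S \<subseteq> {0..1}" by (auto simp: S_def)
  have bdd: "bdd_above S" using sub unfolding bdd_above_def by (intro exI[of _ 1]) auto
  have r: "residual ov a b = Sup S" by (simp add: residual_def S_def)
  have s0: "Sup S \<ge> 0" using cSup_upper[OF \<open>0 \<in> S\<close> bdd] .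
  have s1: "Sup S \<le> 1" using ne sub by (intro cSup_least) auto
  show "residual ov a b \<in> {0..1}" using r s0 s1 by simp
  have lc: "ov a (Sup S) = (SUP v\<in>S. ov a v)"
    using so_lc[OF so a ne sub] .
  have "(SUP v\<in>S. ov a v) \<le> b" using ne by (intro cSUP_least) (auto simp: S_def)
  hence sup_le: "ov a (Sup S) \<le> b" using lc by simp
  have mono: "\<And>v w. v \<in> {0..1} \<Longrightarrow> w \<in> {0..1} \<Longrightarrow> v \<le> w \<Longrightarrow> ov a v \<le> ov a w"
    using so_mono[OF so a] by blast
  fix w :: real assume w: "w \<in> {0..1}"
  show "ov a w \<le> b \<longleftrightarrow> w \<le> residual ov a b"
  proof
    assume "ov a w \<le> b" hence "w \<in> S" using w by (simp add: S_def)
    thus "w \<le> residual ov a b" using r cSup_upper[OF _ bdd] by simp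
  next
    assume "w \<le> residual ov a b"
    hence "ov a w \<le> ov a (Sup S)" using mono[OF w _] r s0 s1 by simp
    thus "ov a w \<le> b" using sup_le by simp
  qed
qed

lemma res_one:
  assumes so: "semi_overlap ov" and ne: "one_neutral ov"
    and x: "x \<in> {0..1}" and y: "y \<in> {0..1}"
  shows "residual ov x y = 1 \<longleftrightarrow> x \<le> y"
proof -
  have "ov x 1 = ov 1 x" using so_comm[OF so x] by simp
  also have "\<dots> = x" using ne x unfolding one_neutral_def by auto
  finally have e: "ov x 1 = x" .
  have le1: "residual ov x y \<le> 1" using res_facts(1)[OF so x y] by simp
  have "x \<le> y \<longleftrightarrow> 1 \<le> residual ov x y" using res_facts(2)[OF so x y, of 1] e by simp
  thus ?thesis using le1 by auto
qed

theorem theorem4p2: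
  fixes ov :: "real \<Rightarrow> real \<Rightarrow> real"
    and A As :: "'u \<Rightarrow> real" and B :: "'v \<Rightarrow> real"
  assumes "semi_overlap ov" and "one_neutral ov"
    and "fuzzy_subset A" and "fuzzy_subset As" and "fuzzy_subset B"
  shows "QIP_FMP_solution ov A As B
           (\<lambda>v. SUP u. ov (As u) (ov (residual ov (As u) (A u)) (residual ov (A u) (B v))))"
proof -
  note so = assms(1) and ne = assms(2)
  have fA: "\<And>u. A u \<in> {0..1}" and fAs: "\<And>u. As u \<in> {0..1}" and fB: "\<And>v. B v \<in> {0..1}"
    using assms(3-5) unfolding fuzzy_subset_def by auto
  define T where "T u v = ov (As u) (ov (residual ov (As u) (A u)) (residual ov (A u) (B v)))" for u v
  have T01: "T u v \<in> {0..1}" for u v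
    unfolding T_def
    by (intro so_range[OF so] fAs res_facts(1)[OF so] fA fB)
  have key: "\<And>C. fuzzy_subset C \<Longrightarrow> QIP_FMP_cond ov A As B C \<longleftrightarrow> (\<forall>u v. T u v \<le> C v)"
  proof -
    fix C :: "'v \<Rightarrow> real" assume fC: "fuzzy_subset C"
    have fCv: "\<And>v. C v \<in> {0..1}" using fC unfolding fuzzy_subset_def by auto
    have eq: "residual ov (residual ov (A u) (B v))
              (residual ov (residual ov (As u) (A u)) (residual ov (As u) (C v))) = 1
          \<longleftrightarrow> T u v \<le> C v" for u v
    proof -
      have r1: "residual ov (A u) (B v) \<in> {0..1}" by (rule res_facts(1)[OF so fA fB])
      have r2: "residual ov (As u) (A u) \<in> {0..1}" by (rule res_facts(1)[OF so fAs fA])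
      have r3: "residual ov (As u) (C v) \<in> {0..1}" by (rule res_facts(1)[OF so fAs fCv])
      have r4: "residual ov (residual ov (As u) (A u)) (residual ov (As u) (C v)) \<in> {0..1}"
        by (rule res_facts(1)[OF so r2 r3])
      have o: "ov (residual ov (As u) (A u)) (residual ov (A u) (B v)) \<in> {0..1}"
        by (rule so_range[OF so r2 r1])
      have "(residual ov (residual ov (A u) (B v))
              (residual ov (residual ov (As u) (A u)) (residual ov (As u) (C v))) = 1) = (residual ov (A u) (B v) \<le>
              residual ov (residual ov (As u) (A u)) (residual ov (As u) (C v)))"
        using res_one[OF so ne r1 r4] by simp
      also have "\<dots> = (ov (residual ov (As u) (A u)) (residual ov (A u) (B v)) \<le> residual ov (As u) (C v))"
        using res_facts(2)[OF so r2 r3 r1] by simp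
      also have "\<dots> = (T u v \<le> C v)"
        unfolding T_def using res_facts(2)[OF so fAs fCv o] by simp
      finally show ?thesis .
    qed
    show "QIP_FMP_cond ov A As B C \<longleftrightarrow> (\<forall>u v. T u v \<le> C v)"
      unfolding QIP_FMP_cond_def using fC eq by simp
  qed
  define Bs where "Bs v = (SUP u. T u v)" for v
  have bdd: "bdd_above (range (\<lambda>u. T u v))" for v
    using T01 by (intro bdd_aboveI[of _ 1]) auto
  have up: "T u v \<le> Bs v" for u v unfolding Bs_def by (rule cSUP_upper[OF _ bdd]) simp
  have fBs: "fuzzy_subset Bs"
    unfolding fuzzy_subset_def
  proof
    fix v
    have "0 \<le> Bs v" using up[of undefined v] T01[of undefined v] by simp
    moreover have "Bs v \<le> 1" unfolding Bs_def using T01 by (intro cSUP_least) auto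
    ultimately show "Bs v \<in> {0..1}" by simp
  qed
  have c1: "QIP_FMP_cond ov A As B Bs" using key[OF fBs] up by blast
  have c2: "\<forall>C. QIP_FMP_cond ov A As B C \<longrightarrow> (\<forall>v. Bs v \<le> C v)"
  proof (intro allI impI)
    fix C v assume h: "QIP_FMP_cond ov A As B C"
    hence fC: "fuzzy_subset C" unfolding QIP_FMP_cond_def by simp
    have "\<forall>u v. T u v \<le> C v" using key[OF fC] h by blast
    thus "Bs v \<le> C v" unfolding Bs_def by (intro cSUP_least) auto
  qed
  have "QIP_FMP_solution ov A As B Bs" unfolding QIP_FMP_solution_def using c1 c2 by blast
  moreover have "Bs = (\<lambda>v. SUP u. ov (As u) (ov (residual ov (As u) (A u)) (residual ov (A u) (B v))))"
    unfolding Bs_def T_def by simp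
  ultimately show ?thesis by simp
qed

end
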